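(* Let $k$ be a commutative ring, $A$ a commutative $k$-algebra, and $(A,\mathfrak g_{A/k},\alpha)$ a Lie algebroid. Let $S^\cdot=\bigoplus_{i\ge 0}S^i$ be a graded $\mathfrak g_{A/k}$-algebra which is noetherian, and let $M^\cdot$ be a graded $(S^\cdot,\mathfrak g_{A/k})$-module which is of finite type over $S^\cdot$. Denote by $\bar S^\cdot=(S^\cdot)^{\mathfrak g_{A/k}}$ and $\bar M^\cdot=(M^\cdot)^{\mathfrak g_{A/k}}$ the invariants. (1) Assume that $S^\cdot$ is semi-simple as a $\mathfrak g_{A/k}$-module and that $\bar S^0$ is a noetherian ring. Then $\bar S^\cdot$ is a graded noetherian subring of $S^\cdot$. (2) Assume the hypotheses of (1) and in addition that $M^\cdot$ is semi-simple as a $\mathfrak g_{A/k}$-module. Then $\bar M^\cdot$ is of finite type over $\bar S^\cdot$.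
   Context: $T_{A/k}$ denotes the $A$-module (and $k$-Lie algebra) of $k$-linear derivations of $A$. A Lie algebroid $(A,\mathfrak g_{A/k},\alpha)$ consists of an $A$-module of finite type $\mathfrak g_{A/k}$ with a $k$-bilinear Lie bracket $[\cdot,\cdot]$ and a map $\alpha:\mathfrak g_{A/k}\to T_{A/k}$ which is a homomorphism of Lie algebras and of $A$-modules, such that $[\delta,a\eta]=\alpha(\delta)(a)\eta+a[\delta,\eta]$ for $a\in A$, $\delta,\eta\in\mathfrak g_{A/k}$. A $\mathfrak g_{A/k}$-module is an $A$-module $M$ with a $k$-Lie algebra homomorphism $f:\mathfrak g_{A/k}\to \mathrm{End}_k(M)$ such that $f(a\delta)(m)=af(\delta)(m)$ and $f(\delta)(am)=\alpha(\delta)(a)m+af(\delta)(m)$. A $\mathfrak g_{A/k}$-module is semi-simple if it is a direct sum of simple $\mathfrak g_{A/k}$-modules (equivalently every $\mathfrak g_{A/k}$-submodule is a direct summand). A graded $\mathfrak g_{A/k}$-algebra is a graded commutative $A$-algebra $S^\cdot=\bigoplus_{i\ge0}S^i$ which is a $\mathfrak g_{A/k}$-module via a homomorphism of $A$-modules and Lie algebras $\phi:\mathfrak g_{A/k}\to T_{S^\cdot/k}$ with $\phi(\delta)(S^i)\subset S^i$ for all $\delta,i$. A graded $(S^\cdot,\mathfrak g_{A/k})$-module is a graded $S^\cdot$-module $M^\cdot=\bigoplus_{i\in\mathbb Z}M^i$ which is also a $\mathfrak g_{A/k}$-module with $\delta M^i\subset M^i$ and $\delta(sm)=\delta(s)m+s\,\delta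 m$ for $s\in S^\cdot$, $m\in M^\cdot$, $\delta\in\mathfrak g_{A/k}$. For such a module, $\bar M^\cdot=\{m\in M^\cdot:\delta m=0\ \forall\delta\in\mathfrak g_{A/k}\}$; it is a graded $\bar S^\cdot$-module and $\bar S^\cdot=\bigoplus_i\bar S^i$ is a graded subring of $S^\cdot$. *)

theory Defs
  imports Main
begin

definition ring_hom_t :: "('a::comm_ring_1 \<Rightarrow> 'b::comm_ring_1) \<Rightarrow> bool" where
  "ring_hom_t f \<longleftrightarrow> f 1 = 1 \<and> (\<forall>x y. f (x + y) = f x + f y) \<and> (\<forall>x y. f (x * y) = f x * f y)"

definition module_t :: "('r::comm_ring_1 \<Rightarrow> 'm::ab_group_add \<Rightarrow> 'm) \<Rightarrow> bool" where
  "module_t sc \<longleftrightarrow>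
     (\<forall>a x y. sc a (x + y) = sc a x + sc a y) \<and>
     (\<forall>a b x. sc (a + b) x = sc a x + sc b x) \<and>
     (\<forall>a b x. sc (a * b) x = sc a (sc b x)) \<and>
     (\<forall>x. sc 1 x = x)"

definition fin_gen_over :: "'r set \<Rightarrow> ('r \<Rightarrow> 'm::ab_group_add \<Rightarrow> 'm) \<Rightarrow> 'm set \<Rightarrow> bool" where
  "fin_gen_over R sc N \<longleftrightarrow>
     (\<exists>F. finite F \<and> F \<subseteq> N \<and>
        N = {x. \<exists>c. (\<forall>f\<in>F. c f \<in> R) \<and> x = (\<Sum>f\<in>F. sc (c f) f)})"

definition subring_t :: "'r::comm_ring_1 set \<Rightarrow> bool" where
  "subring_t R \<longleftrightarrow> 0 \<in> R \<and> 1 \<in> R \<and> (\<forall>x\<in>R. - x \<in> R) \<and>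
     (\<forall>x\<in>R. \<forall>y\<in>R. x + y \<in> R \<and> x * y \<in> R)"

definition ideal_in :: "'r::comm_ring_1 set \<Rightarrow> 'r set \<Rightarrow> bool" where
  "ideal_in R I \<longleftrightarrow> I \<subseteq> R \<and> 0 \<in> I \<and> (\<forall>x\<in>I. \<forall>y\<in>I. x + y \<in> I) \<and>
     (\<forall>r\<in>R. \<forall>x\<in>I. r * x \<in> I)"

definition noetherian_on :: "'r::comm_ring_1 set \<Rightarrow> bool" where
  "noetherian_on R \<longleftrightarrow> (\<forall>I. ideal_in R I \<longrightarrow> fin_gen_over R (*) I)"

definition derivations :: "('k::comm_ring_1 \<Rightarrow> 'b::comm_ring_1) \<Rightarrow> ('b \<Rightarrow> 'b) set" where
  "derivations \<iota> = {D. (\<forall>x y. D (x + y) = D x + D y) \<and>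
                       (\<forall>c x. D (\<iota> c * x) = \<iota> c * D x) \<and>
                       (\<forall>x y. D (x * y) = x * D y + y * D x)}"

definition lie_algebroid ::
  "('k::comm_ring_1 \<Rightarrow> 'a::comm_ring_1) \<Rightarrow> ('a \<Rightarrow> 'g::ab_group_add \<Rightarrow> 'g) \<Rightarrow>
   ('g \<Rightarrow> 'g \<Rightarrow> 'g) \<Rightarrow> ('g \<Rightarrow> 'a \<Rightarrow> 'a) \<Rightarrow> bool" where
  "lie_algebroid \<iota> gsc br \<alpha> \<longleftrightarrow>
     ring_hom_t \<iota> \<and> module_t gsc \<and> fin_gen_over UNIV gsc UNIV \<and>
     \<comment> \<open>k-bilinear Lie bracket\<close>
     (\<forall>x y z. br (x + y) z = br x z + br y z) \<and>
     (\<forall>x y z. br x (y + z) = br x y + br x z) \<and>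
     (\<forall>c x y. br (gsc (\<iota> c) x) y = gsc (\<iota> c) (br x y)) \<and>
     (\<forall>c x y. br x (gsc (\<iota> c) y) = gsc (\<iota> c) (br x y)) \<and>
     (\<forall>x. br x x = 0) \<and>
     (\<forall>x y z. br x (br y z) + br y (br z x) + br z (br x y) = 0) \<and>
     \<comment> \<open>anchor: A-linear Lie algebra homomorphism into T_{A/k}\<close>
     (\<forall>d. \<alpha> d \<in> derivations \<iota>) \<and>
     (\<forall>d e x. \<alpha> (d + e) x = \<alpha> d x + \<alpha> e x) \<and>
     (\<forall>a d x. \<alpha> (gsc a d) x = a * \<alpha> d x) \<and>
     (\<forall>d e x. \<alpha> (br d e) x = \<alpha> d (\<alpha> e x) - \<alpha> e (\<alpha> d x)) \<and>
     \<comment> \<open>Leibniz rule\<close>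
     (\<forall>d e a. br d (gsc a e) = gsc (\<alpha> d a) e + gsc a (br d e))"

definition g_module ::
  "('k::comm_ring_1 \<Rightarrow> 'a::comm_ring_1) \<Rightarrow> ('a \<Rightarrow> 'g::ab_group_add \<Rightarrow> 'g) \<Rightarrow>
   ('g \<Rightarrow> 'g \<Rightarrow> 'g) \<Rightarrow> ('g \<Rightarrow> 'a \<Rightarrow> 'a) \<Rightarrow>
   ('a \<Rightarrow> 'm::ab_group_add \<Rightarrow> 'm) \<Rightarrow> ('g \<Rightarrow> 'm \<Rightarrow> 'm) \<Rightarrow> bool" where
  "g_module \<iota> gsc br \<alpha> msc f \<longleftrightarrow>
     module_t msc \<and>
     \<comment> \<open>f takes values in End_k(M)\<close>
     (\<forall>d x y. f d (x + y) = f d x + f d y) \<and>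
     (\<forall>d c x. f d (msc (\<iota> c) x) = msc (\<iota> c) (f d x)) \<and>
     \<comment> \<open>f is a k-Lie algebra homomorphism\<close>
     (\<forall>d e x. f (d + e) x = f d x + f e x) \<and>
     (\<forall>c d x. f (gsc (\<iota> c) d) x = msc (\<iota> c) (f d x)) \<and>
     (\<forall>d e x. f (br d e) x = f d (f e x) - f e (f d x)) \<and>
     \<comment> \<open>compatibilities\<close>
     (\<forall>a d x. f (gsc a d) x = msc a (f d x)) \<and>
     (\<forall>d a x. f d (msc a x) = msc (\<alpha> d a) x + msc a (f d x))"

definition g_submodule ::
  "('a \<Rightarrow> 'm::ab_group_add \<Rightarrow> 'm) \<Rightarrow> ('g \<Rightarrow> 'm \<Rightarrow> 'm) \<Rightarrow> 'm set \<Rightarrow> bool" where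
  "g_submodule msc f N \<longleftrightarrow> 0 \<in> N \<and> (\<forall>x\<in>N. \<forall>y\<in>N. x + y \<in> N) \<and>
     (\<forall>a. \<forall>x\<in>N. msc a x \<in> N) \<and> (\<forall>d. \<forall>x\<in>N. f d x \<in> N)"

definition g_semisimple ::
  "('a \<Rightarrow> 'm::ab_group_add \<Rightarrow> 'm) \<Rightarrow> ('g \<Rightarrow> 'm \<Rightarrow> 'm) \<Rightarrow> bool" where
  "g_semisimple msc f \<longleftrightarrow>
     (\<forall>N. g_submodule msc f N \<longrightarrow>
        (\<exists>N'. g_submodule msc f N' \<and> N \<inter> N' = {0} \<and>
              (\<forall>x. \<exists>y\<in>N. \<exists>z\<in>N'. x = y + z)))"

definition invariants :: "('g \<Rightarrow> 'm::zero \<Rightarrow> 'm) \<Rightarrow> 'm set" where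
  "invariants f = {x. \<forall>d. f d x = 0}"

definition direct_grading :: "('i \<Rightarrow> 'm::ab_group_add set) \<Rightarrow> bool" where
  "direct_grading G \<longleftrightarrow>
     (\<forall>i. 0 \<in> G i \<and> (\<forall>x\<in>G i. \<forall>y\<in>G i. x + y \<in> G i \<and> - x \<in> G i)) \<and>
     (\<forall>x. \<exists>!c. (\<forall>i. c i \<in> G i) \<and> finite {i. c i \<noteq> 0} \<and> x = (\<Sum>i\<in>{i. c i \<noteq> 0}. c i))"

definition graded_algebra :: "('a::comm_ring_1 \<Rightarrow> 's::comm_ring_1) \<Rightarrow> (nat \<Rightarrow> 's set) \<Rightarrow> bool" where
  "graded_algebra j Sg \<longleftrightarrow> ring_hom_t j \<and> direct_grading Sg \<and>
     (\<forall>a i. \<forall>x\<in>Sg i. j a * x \<in> Sg i) \<and>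
     (\<forall>i l. \<forall>x\<in>Sg i. \<forall>y\<in>Sg l. x * y \<in> Sg (i + l))"

definition graded_g_algebra ::
  "('k::comm_ring_1 \<Rightarrow> 'a::comm_ring_1) \<Rightarrow> ('a \<Rightarrow> 'g::ab_group_add \<Rightarrow> 'g) \<Rightarrow>
   ('g \<Rightarrow> 'g \<Rightarrow> 'g) \<Rightarrow> ('g \<Rightarrow> 'a \<Rightarrow> 'a) \<Rightarrow>
   ('a \<Rightarrow> 's::comm_ring_1) \<Rightarrow> (nat \<Rightarrow> 's set) \<Rightarrow> ('g \<Rightarrow> 's \<Rightarrow> 's) \<Rightarrow> bool" where
  "graded_g_algebra \<iota> gsc br \<alpha> j Sg \<phi> \<longleftrightarrow>
     graded_algebra j Sg \<and>
     g_module \<iota> gsc br \<alpha> (\<lambda>a s. j a * s) \<phi> \<and>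
     (\<forall>d. \<phi> d \<in> derivations (j \<circ> \<iota>)) \<and>
     (\<forall>d i. \<forall>x\<in>Sg i. \<phi> d x \<in> Sg i)"

definition graded_S_g_module ::
  "('k::comm_ring_1 \<Rightarrow> 'a::comm_ring_1) \<Rightarrow> ('a \<Rightarrow> 'g::ab_group_add \<Rightarrow> 'g) \<Rightarrow>
   ('g \<Rightarrow> 'g \<Rightarrow> 'g) \<Rightarrow> ('g \<Rightarrow> 'a \<Rightarrow> 'a) \<Rightarrow>
   ('a \<Rightarrow> 's::comm_ring_1) \<Rightarrow> (nat \<Rightarrow> 's set) \<Rightarrow> ('g \<Rightarrow> 's \<Rightarrow> 's) \<Rightarrow>
   ('s \<Rightarrow> 'm::ab_group_add \<Rightarrow> 'm) \<Rightarrow> (int \<Rightarrow> 'm set) \<Rightarrow> ('g \<Rightarrow> 'm \<Rightarrow> 'm) \<Rightarrow> bool" where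
  "graded_S_g_module \<iota> gsc br \<alpha> j Sg \<phi> smul Mg \<rho> \<longleftrightarrow>
     module_t smul \<and> direct_grading Mg \<and>
     (\<forall>i l. \<forall>s\<in>Sg i. \<forall>x\<in>Mg l. smul s x \<in> Mg (int i + l)) \<and>
     g_module \<iota> gsc br \<alpha> (\<lambda>a x. smul (j a) x) \<rho> \<and>
     (\<forall>d i. \<forall>x\<in>Mg i. \<rho> d x \<in> Mg i) \<and>
     (\<forall>d s x. \<rho> d (smul s x) = smul (\<phi> d s) x + smul s (\<rho> d x))"

definition graded_subring :: "(nat \<Rightarrow> 's::comm_ring_1 set) \<Rightarrow> 's set \<Rightarrow> bool" where
  "graded_subring Sg R \<longleftrightarrow> subring_t R \<and>
     (\<forall>x\<in>R. \<exists>c n. (\<forall>i. c i \<in> R \<inter> Sg i) \<and> x = (\<Sum>i\<le>n. c i))"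

end

theory Submission
  imports Defs
begin


lemma mod_zero_l: "module_t sc \<Longrightarrow> sc 0 x = 0"
proof -
  assume m: "module_t sc"
  have "sc (0+0) x = sc 0 x + sc 0 x" using m unfolding module_t_def by blast
  then show ?thesis by simp
qed

lemma mod_zero_r: "module_t sc \<Longrightarrow> sc a 0 = 0"
proof -
  assume m: "module_t sc"
  have "sc a (0+0) = sc a 0 + sc a 0" using m unfolding module_t_def by blast
  then show ?thesis by simp
qed

lemma mod_add_l: "module_t sc \<Longrightarrow> sc (a+b) x = sc a x + sc b x"
  unfolding module_t_def by blast
lemma mod_add_r: "module_t sc \<Longrightarrow> sc a (x+y) = sc a x + sc a y"
  unfolding module_t_def by blast
lemma mod_mult: "module_t sc \<Longrightarrow> sc (a*b) x = sc a (sc b x)"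
  unfolding module_t_def by blast
lemma mod_one: "module_t sc \<Longrightarrow> sc 1 x = x"
  unfolding module_t_def by blast

lemma mod_neg_l: "module_t sc \<Longrightarrow> sc (-a) x = - sc a x"
proof -
  assume m: "module_t sc"
  have "sc (a + -a) x = sc a x + sc (-a) x" using mod_add_l[OF m] by blast
  then have "0 = sc a x + sc (-a) x" using mod_zero_l[OF m] by simp
  then show ?thesis by (simp add: eq_neg_iff_add_eq_0 add.commute)
qed

lemma mod_neg_r: "module_t sc \<Longrightarrow> sc a (-x) = - sc a x"
proof -
  assume m: "module_t sc"
  have "sc a (x + -x) = sc a x + sc a (-x)" using mod_add_r[OF m] by blast
  then have "0 = sc a x + sc a (-x)" using mod_zero_r[OF m] by simp
  then show ?thesis by (simp add: eq_neg_iff_add_eq_0 add.commute)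
qed

lemma mod_diff_r: "module_t sc \<Longrightarrow> sc a (x - y) = sc a x - sc a y"
  using mod_add_r[of sc a x "-y"] mod_neg_r[of sc a y] by simp
lemma mod_diff_l: "module_t sc \<Longrightarrow> sc (a - b) x = sc a x - sc b x"
  using mod_add_l[of sc a "-b" x] mod_neg_l[of sc b x] by simp

lemma mod_sum_l: "module_t sc \<Longrightarrow> sc (sum c A) x = (\<Sum>i\<in>A. sc (c i) x)"
proof (induction A rule: infinite_finite_induct)
  case (infinite A) then show ?case by (simp add: mod_zero_l)
next
  case empty then show ?case by (simp add: mod_zero_l)
next
  case (insert a A) then show ?case by (simp add: mod_add_l)
qed

lemma mod_sum_r: "module_t sc \<Longrightarrow> sc a (sum h A) = (\<Sum>i\<in>A. sc a (h i))"
proof (induction A rule: infinite_finite_induct)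
  case (infinite A) then show ?case by (simp add: mod_zero_r)
next
  case empty then show ?case by (simp add: mod_zero_r)
next
  case (insert a A) then show ?case by (simp add: mod_add_r)
qed

lemma addf_zero: "(\<forall>x y. D (x + y) = D x + D y) \<Longrightarrow> D (0::'b::ab_group_add) = (0::'c::ab_group_add)"
proof -
  assume a: "\<forall>x y. D (x + y) = D x + D y"
  have "D (0+0) = D 0 + D 0" using a by blast
  then show ?thesis by simp
qed

lemma addf_neg: "(\<forall>x y. D (x + y) = D x + D y) \<Longrightarrow> D (-(x::'b::ab_group_add)) = - (D x::'c::ab_group_add)"
proof -
  assume a: "\<forall>x y. D (x + y) = D x + D y"
  have "D (x + -x) = D x + D (-x)" using a by blast
  then have "0 = D x + D (-x)" using addf_zero[OF a] by simp
  then show ?thesis by (simp add: eq_neg_iff_add_eq_0 add.commute)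
qed

lemma addf_diff: "(\<forall>x y. D (x + y) = D x + D y) \<Longrightarrow> D ((x::'b::ab_group_add) - y) = (D x - D y::'c::ab_group_add)"
  using addf_neg[of D y] by (metis diff_conv_add_uminus)

inductive_set gen :: "'r set \<Rightarrow> ('r \<Rightarrow> 'm::ab_group_add \<Rightarrow> 'm) \<Rightarrow> 'm set \<Rightarrow> 'm set"
  for R sc F where
  g0: "0 \<in> gen R sc F"
| gF: "f \<in> F \<Longrightarrow> f \<in> gen R sc F"
| gadd: "x \<in> gen R sc F \<Longrightarrow> y \<in> gen R sc F \<Longrightarrow> x + y \<in> gen R sc F"
| gsc: "r \<in> R \<Longrightarrow> x \<in> gen R sc F \<Longrightarrow> sc r x \<in> gen R sc F"

lemma gen_closed:
  assumes "0 \<in> N" "\<forall>x\<in>N. \<forall>y\<in>N. x + y \<in> N" "\<forall>r\<in>R. \<forall>x\<in>N. sc r x \<in> N" "F \<subseteq> N"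
  shows "gen R sc F \<subseteq> N"
proof
  fix x assume "x \<in> gen R sc F" then show "x \<in> N"
    by induction (use assms in auto)
qed

lemma gen_subset: "F \<subseteq> gen R sc F' \<Longrightarrow> gen R sc F \<subseteq> gen R sc F'"
  by (rule gen_closed) (auto intro: gen.intros)

lemma gen_mono: "F \<subseteq> F' \<Longrightarrow> gen R sc F \<subseteq> gen R sc F'"
  by (rule gen_subset) (auto intro: gen.intros)

lemma gen_monoR: "R \<subseteq> R' \<Longrightarrow> gen R sc F \<subseteq> gen R' sc F"
proof
  assume a: "R \<subseteq> R'"
  fix x assume "x \<in> gen R sc F" then show "x \<in> gen R' sc F"
    by induction (use a in \<open>auto intro: gen.intros\<close>)
qed

lemma gen_sum: "(\<forall>i\<in>A. h i \<in> gen R sc F) \<Longrightarrow> sum h A \<in> gen R sc F"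
proof (induction A rule: infinite_finite_induct)
  case (infinite A) then show ?case by (simp add: g0)
next
  case empty then show ?case by (simp add: g0)
next
  case (insert a A) then show ?case by (simp add: gadd)
qed

lemma gen_empty: "module_t sc \<Longrightarrow> gen R sc {} = {0}"
proof
  assume m: "module_t sc"
  show "gen R sc {} \<subseteq> {0}"
    by (rule gen_closed) (auto simp: mod_zero_r[OF m])
qed (auto intro: g0)

lemma subring_UNIV: "subring_t UNIV"
  unfolding subring_t_def by auto

lemma gen_neg:
  assumes m: "module_t sc" and R: "subring_t R" and x: "x \<in> gen R sc F"
  shows "- x \<in> gen R sc F"
proof -
  have "-1 \<in> R" using R unfolding subring_t_def by blast
  then have "sc (-1) x \<in> gen R sc F" using x by (rule gsc)
  then show ?thesis using mod_neg_l[OF m, of 1] mod_one[OF m] by simp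
qed

lemma gen_diff:
  assumes m: "module_t sc" and R: "subring_t R" and x: "x \<in> gen R sc F" and y: "y \<in> gen R sc F"
  shows "x - y \<in> gen R sc F"
  using gadd[OF x gen_neg[OF m R y]] by simp

lemma gen_insert:
  assumes m: "module_t sc" and R: "subring_t R" and x: "x \<in> gen R sc (insert g F)"
  shows "\<exists>r\<in>R. \<exists>y\<in>gen R sc F. x = sc r g + y"
  using x
proof induction
  case g0
  have "0 \<in> R" using R unfolding subring_t_def by blast
  moreover have "0 = sc 0 g + 0" using mod_zero_l[OF m] by simp
  ultimately show ?case using gen.g0 by blast
next
  case (gF f)
  have R01: "0 \<in> R" "1 \<in> R" using R unfolding subring_t_def by blast+
  show ?case
  proof (cases "f = g")
    case True
    then have "f = sc 1 g + 0" using mod_one[OF m] by simp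
    then show ?thesis using R01 gen.g0 by blast
  next
    case False then have "f \<in> F" using gF by simp
    then show ?thesis using R01 mod_zero_l[OF m] by (auto intro!: bexI[of _ 0] bexI[of _ f] gen.gF)
  qed
next
  case (gadd x y)
  then obtain r y1 s y2 where "r \<in> R" "y1 \<in> gen R sc F" "x = sc r g + y1"
    "s \<in> R" "y2 \<in> gen R sc F" "y = sc s g + y2" by blast
  moreover have "r + s \<in> R" using R \<open>r \<in> R\<close> \<open>s \<in> R\<close> unfolding subring_t_def by blast
  ultimately show ?case
    by (intro bexI[of _ "r+s"] bexI[of _ "y1+y2"]) (auto simp: mod_add_l[OF m] algebra_simps intro: gen.gadd)
next
  case (gsc r x)
  then obtain s y1 where "s \<in> R" "y1 \<in> gen R sc F" "x = sc s g + y1" by blast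
  moreover have "r * s \<in> R" using R \<open>r \<in> R\<close> \<open>s \<in> R\<close> unfolding subring_t_def by blast
  ultimately show ?case using gsc(1)
    by (intro bexI[of _ "r*s"] bexI[of _ "sc r y1"]) (auto simp: mod_add_r[OF m] mod_mult[OF m] intro: gen.gsc)
qed

lemma spn_eq_gen:
  assumes m: "module_t sc" and R: "subring_t R" and fin: "finite F"
  shows "{x. \<exists>c. (\<forall>f\<in>F. c f \<in> R) \<and> x = (\<Sum>f\<in>F. sc (c f) f)} = gen R sc F"
proof
  show "{x. \<exists>c. (\<forall>f\<in>F. c f \<in> R) \<and> x = (\<Sum>f\<in>F. sc (c f) f)} \<subseteq> gen R sc F"
  proof clarify
    fix c assume "\<forall>f\<in>F. c f \<in> R"
    then show "(\<Sum>f\<in>F. sc (c f) f) \<in> gen R sc F"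
      by (intro gen_sum ballI gen.gsc) (auto intro: gen.gF)
  qed
next
  have R01: "0 \<in> R" "1 \<in> R" using R unfolding subring_t_def by blast+
  show "gen R sc F \<subseteq> {x. \<exists>c. (\<forall>f\<in>F. c f \<in> R) \<and> x = (\<Sum>f\<in>F. sc (c f) f)}"
  proof
    fix x assume "x \<in> gen R sc F"
    then show "x \<in> {x. \<exists>c. (\<forall>f\<in>F. c f \<in> R) \<and> x = (\<Sum>f\<in>F. sc (c f) f)}"
    proof induction
      case g0 then show ?case using R01 by (auto intro!: exI[of _ "\<lambda>_. 0"] simp: mod_zero_l[OF m])
    next
      case (gF f)
      have "(\<Sum>x\<in>F. sc (if x = f then 1 else 0) x) = (\<Sum>x\<in>F. if x = f then x else 0)"
        by (rule sum.cong) (auto simp: mod_one[OF m] mod_zero_l[OF m])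
      also have "\<dots> = (\<Sum>x\<in>F. if x = f then f else 0)" by (rule sum.cong) auto
      also have "\<dots> = f" using gF fin by (simp only: sum.delta if_True)
      finally show ?case using R01 by (auto intro!: exI[of _ "\<lambda>x. if x = f then 1 else 0"])
    next
      case (gadd x y)
      then obtain c d where "\<forall>f\<in>F. c f \<in> R" "x = (\<Sum>f\<in>F. sc (c f) f)"
        "\<forall>f\<in>F. d f \<in> R" "y = (\<Sum>f\<in>F. sc (d f) f)" by blast
      moreover have "\<forall>f\<in>F. c f + d f \<in> R" using R calculation unfolding subring_t_def by blast
      ultimately show ?case
        by (auto intro!: exI[of _ "\<lambda>f. c f + d f"] simp: mod_add_l[OF m] sum.distrib)
    next
      case (gsc r x)
      then obtain c where "\<forall>f\<in>F. c f \<in> R" "x = (\<Sum>f\<in>F. sc (c f) f)" by blast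
      moreover have "\<forall>f\<in>F. r * c f \<in> R" using R calculation gsc(1) unfolding subring_t_def by blast
      ultimately show ?case
        by (auto intro!: exI[of _ "\<lambda>f. r * c f"] simp: mod_sum_r[OF m] mod_mult[OF m])
    qed
  qed
qed

lemma fin_gen_iff:
  assumes m: "module_t sc" and R: "subring_t R"
  shows "fin_gen_over R sc N \<longleftrightarrow> (\<exists>F. finite F \<and> F \<subseteq> N \<and> N = gen R sc F)"
proof
  assume "fin_gen_over R sc N"
  then obtain F where F: "finite F" "F \<subseteq> N" and e: "N = {x. \<exists>c. (\<forall>f\<in>F. c f \<in> R) \<and> x = (\<Sum>f\<in>F. sc (c f) f)}"
    unfolding fin_gen_over_def by blast
  have "N = gen R sc F" using trans[OF e spn_eq_gen[OF m R F(1)]] .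
  then show "\<exists>F. finite F \<and> F \<subseteq> N \<and> N = gen R sc F" using F by (intro exI conjI)
next
  assume "\<exists>F. finite F \<and> F \<subseteq> N \<and> N = gen R sc F"
  then obtain F where F: "finite F" "F \<subseteq> N" and e: "N = gen R sc F" by blast
  have "N = {x. \<exists>c. (\<forall>f\<in>F. c f \<in> R) \<and> x = (\<Sum>f\<in>F. sc (c f) f)}"
    using trans[OF e sym[OF spn_eq_gen[OF m R F(1)]]] .
  then show "fin_gen_over R sc N" unfolding fin_gen_over_def using F by (intro exI conjI)
qed



lemma noeth_module:
  fixes sc :: "'s::comm_ring_1 \<Rightarrow> 'm::ab_group_add \<Rightarrow> 'm"
  assumes m: "module_t sc" and noeth: "noetherian_on (UNIV::'s set)" and fin: "finite G"
  shows "N \<subseteq> gen UNIV sc G \<Longrightarrow> 0 \<in> N \<Longrightarrow> (\<forall>x\<in>N. \<forall>y\<in>N. x+y\<in>N) \<Longrightarrow> (\<forall>r. \<forall>x\<in>N. sc r x \<in> N)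
     \<Longrightarrow> \<exists>F. finite F \<and> F \<subseteq> N \<and> N = gen UNIV sc F"
  using fin
proof (induction G arbitrary: N rule: finite_induct)
  case empty
  then have "N = {0}" using gen_empty[OF m] by blast
  then show ?case using gen_empty[OF m] by (intro exI[of _ "{}"]) auto
next
  case (insert g G N)
  have mS: "module_t ((*) :: 's \<Rightarrow> 's \<Rightarrow> 's)" unfolding module_t_def by (auto simp: algebra_simps)
  have negN: "- x \<in> N" if "x \<in> N" for x
  proof -
    have "sc (-1) x \<in> N" using insert.prems(4) that by blast
    then show ?thesis by (simp add: mod_neg_l[OF m] mod_one[OF m])
  qed
  have diffN: "x - y \<in> N" if "x \<in> N" "y \<in> N" for x y
  proof -
    have "x + - y \<in> N" using insert.prems(3) that negN by blast
    then show ?thesis by simp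
  qed
  define I where "I = {s. \<exists>y\<in>gen UNIV sc G. sc s g + y \<in> N}"
  have idI: "ideal_in UNIV I"
    unfolding ideal_in_def
  proof (intro conjI ballI)
    have "sc 0 g + 0 = 0" by (simp add: mod_zero_l[OF m])
    then have "sc 0 g + 0 \<in> N" using insert.prems(2) by simp
    then show "0 \<in> I" unfolding I_def using gen.g0[of UNIV sc G] by blast
  next
    fix x y assume "x \<in> I" "y \<in> I"
    then obtain y1 y2 where a: "y1 \<in> gen UNIV sc G" "sc x g + y1 \<in> N" "y2 \<in> gen UNIV sc G" "sc y g + y2 \<in> N"
      unfolding I_def by blast
    have eq: "sc (x+y) g + (y1+y2) = (sc x g + y1) + (sc y g + y2)"
      by (simp add: mod_add_l[OF m] algebra_simps)
    have "(sc x g + y1) + (sc y g + y2) \<in> N" using insert.prems(3) a(2,4) by blast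
    then have "sc (x+y) g + (y1+y2) \<in> N" unfolding eq .
    moreover have "y1 + y2 \<in> gen UNIV sc G" using a(1,3) by (rule gen.gadd)
    ultimately show "x + y \<in> I" unfolding I_def by blast
  next
    fix r x assume "x \<in> I"
    then obtain y1 where a: "y1 \<in> gen UNIV sc G" "sc x g + y1 \<in> N" unfolding I_def by blast
    have eq: "sc (r*x) g + sc r y1 = sc r (sc x g + y1)"
      by (simp add: mod_add_r[OF m] mod_mult[OF m])
    have "sc r (sc x g + y1) \<in> N" using insert.prems(4) a(2) by blast
    then have "sc (r*x) g + sc r y1 \<in> N" unfolding eq .
    moreover have "sc r y1 \<in> gen UNIV sc G" using a(1) by (intro gen.gsc) auto
    ultimately show "r * x \<in> I" unfolding I_def by blast
  qed (rule subset_UNIV)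
  have "fin_gen_over UNIV (*) I" using noeth[unfolded noetherian_on_def, rule_format, OF idI] .
  then obtain FI where FIall: "finite FI \<and> FI \<subseteq> I \<and>
    I = {x. \<exists>c. (\<forall>f\<in>FI. c f \<in> UNIV) \<and> x = (\<Sum>f\<in>FI. c f * f)}"
    unfolding fin_gen_over_def by (rule exE)
  note FI = conjunct1[OF FIall] conjunct1[OF conjunct2[OF FIall]] conjunct2[OF conjunct2[OF FIall]]
  have "\<forall>t\<in>FI. \<exists>y. y \<in> gen UNIV sc G \<and> sc t g + y \<in> N" using FI(2) unfolding I_def by blast
  from bchoice[OF this] obtain yy where yy: "\<forall>t\<in>FI. yy t \<in> gen UNIV sc G \<and> sc t g + yy t \<in> N"
    by (rule exE)
  define N' where "N' = N \<inter> gen UNIV sc G"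
  have "\<exists>F. finite F \<and> F \<subseteq> N' \<and> N' = gen UNIV sc F"
  proof (rule insert.IH)
    show "N' \<subseteq> gen UNIV sc G" unfolding N'_def by (rule Int_lower2)
    show "0 \<in> N'" unfolding N'_def using insert.prems(2) by (simp add: gen.g0)
    show "\<forall>x\<in>N'. \<forall>y\<in>N'. x + y \<in> N'" unfolding N'_def using insert.prems(3) by (auto intro: gen.gadd)
    show "\<forall>r. \<forall>x\<in>N'. sc r x \<in> N'" unfolding N'_def using insert.prems(4) by (auto intro: gen.gsc)
  qed
  then obtain F' where F'all: "finite F' \<and> F' \<subseteq> N' \<and> N' = gen UNIV sc F'" by (rule exE)
  note F' = conjunct1[OF F'all] conjunct1[OF conjunct2[OF F'all]] conjunct2[OF conjunct2[OF F'all]]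
  define F where "F = (\<lambda>t. sc t g + yy t) ` FI \<union> F'"
  have finF: "finite F" unfolding F_def using FI(1) F'(1) by simp
  have FN: "F \<subseteq> N" unfolding F_def using yy F'(2) unfolding N'_def by auto
  have genN: "gen UNIV sc F \<subseteq> N"
    by (rule gen_closed) (use insert.prems FN in auto)
  have "N \<subseteq> gen UNIV sc F"
  proof
    fix x assume xN: "x \<in> N"
    then have "x \<in> gen UNIV sc (insert g G)" using insert.prems(1) by blast
    then have "\<exists>r\<in>UNIV. \<exists>y\<in>gen UNIV sc G. x = sc r g + y" by (rule gen_insert[OF m subring_UNIV])
    then obtain s y where y: "y \<in> gen UNIV sc G" and x: "x = sc s g + y" by auto
    have "s \<in> I" unfolding I_def using y x xN by auto
    then have "s \<in> {x. \<exists>c. (\<forall>f\<in>FI. c f \<in> UNIV) \<and> x = (\<Sum>f\<in>FI. c f * f)}" by (subst FI(3)[symmetric])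
    then obtain c where c: "s = (\<Sum>t\<in>FI. c t * t)" by auto
    define w where "w = (\<Sum>t\<in>FI. sc (c t) (sc t g + yy t))"
    have wF: "w \<in> gen UNIV sc F" unfolding w_def
      by (intro gen_sum ballI gen.gsc) (auto simp: F_def intro: gen.gF)
    have "w = (\<Sum>t\<in>FI. sc (c t * t) g) + (\<Sum>t\<in>FI. sc (c t) (yy t))"
      unfolding w_def by (simp add: mod_add_r[OF m] mod_mult[OF m] sum.distrib)
    also have "(\<Sum>t\<in>FI. sc (c t * t) g) = sc s g" unfolding c by (rule mod_sum_l[OF m, symmetric])
    finally have w: "w = sc s g + (\<Sum>t\<in>FI. sc (c t) (yy t))" .
    have "x - w = y - (\<Sum>t\<in>FI. sc (c t) (yy t))" using x w by simp
    moreover have "(\<Sum>t\<in>FI. sc (c t) (yy t)) \<in> gen UNIV sc G"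
      using yy by (intro gen_sum ballI gen.gsc) auto
    ultimately have "x - w \<in> gen UNIV sc G" using gen_diff[OF m subring_UNIV y] by simp
    moreover have "x - w \<in> N" using diffN[OF xN] genN wF by auto
    ultimately have "x - w \<in> N'" unfolding N'_def by simp
    then have "x - w \<in> gen UNIV sc F'" by (subst F'(3)[symmetric])
    moreover have "F' \<subseteq> F" unfolding F_def by (rule Un_upper2)
    ultimately have "x - w \<in> gen UNIV sc F" using gen_mono[of F' F] by auto
    then have "w + (x - w) \<in> gen UNIV sc F" using wF by (intro gen.gadd)
    then show "x \<in> gen UNIV sc F" by simp
  qed
  then have "N = gen UNIV sc F" using genN by (rule subset_antisym)
  then show ?case using finF FN by (intro exI conjI)
qed



lemma addf_sum: "(\<forall>x y. D (x + y) = D x + D y) \<Longrightarrow> D (sum (h :: _ \<Rightarrow> 'b::ab_group_add) A) = (\<Sum>i\<in>A. (D (h i) :: 'c::ab_group_add))"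
proof (induction A rule: infinite_finite_induct)
  case (infinite A) then show ?case by (simp add: addf_zero)
next
  case empty then show ?case by (simp add: addf_zero)
next
  case (insert a A) then show ?case by simp
qed

lemma rho_gen:
  assumes m: "module_t smul"
    and rho_add: "\<forall>x y. \<rho>d (x + y) = \<rho>d x + \<rho>d y"
    and rho_smul: "\<forall>s x. \<rho>d (smul s x) = smul (\<phi>d s) x + smul s (\<rho>d x)"
    and FI: "\<forall>f\<in>F. \<rho>d f = 0"
    and x: "x \<in> gen UNIV smul F"
  shows "\<rho>d x \<in> gen UNIV smul F"
  using x
proof induction
  case g0 then show ?case using addf_zero[OF rho_add] by (simp add: gen.g0)
next
  case (gF f) then show ?case using FI by (simp add: gen.g0)
next
  case (gadd x y) then show ?case using rho_add by (simp add: gen.gadd)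
next
  case (gsc r x) then show ?case using rho_smul by (simp add: gen.gadd gen.gsc gen.gF)
qed

lemma inv_lemma:
  fixes j :: "'a \<Rightarrow> 's::comm_ring_1" and \<phi> :: "'g \<Rightarrow> 's \<Rightarrow> 's"
    and smul :: "'s \<Rightarrow> 'm::ab_group_add \<Rightarrow> 'm" and \<rho> :: "'g \<Rightarrow> 'm \<Rightarrow> 'm"
  assumes semi: "g_semisimple (\<lambda>a s. j a * s) \<phi>"
    and m: "module_t smul"
    and rho_add: "\<forall>d x y. \<rho> d (x + y) = \<rho> d x + \<rho> d y"
    and rho_smul: "\<forall>d s x. \<rho> d (smul s x) = smul (\<phi> d s) x + smul s (\<rho> d x)"
    and fin: "finite F"
  shows "F \<subseteq> invariants \<rho> \<Longrightarrow> x \<in> gen UNIV smul F \<Longrightarrow> x \<in> invariants \<rho> \<Longrightarrow> x \<in> gen (invariants \<phi>) smul F"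
  using fin
proof (induction F arbitrary: x rule: finite_induct)
  case empty
  then have "x = 0" using gen_empty[OF m] by auto
  then show ?case by (simp add: gen.g0)
next
  case (insert f F x)
  have radd: "\<forall>x y. \<rho> d (x + y) = \<rho> d x + \<rho> d y" for d using rho_add by simp
  have rsm: "\<forall>s x. \<rho> d (smul s x) = smul (\<phi> d s) x + smul s (\<rho> d x)" for d using rho_smul by simp
  have fI: "\<rho> d f = 0" for d using insert.prems(1) unfolding invariants_def by auto
  have FI: "\<forall>h\<in>F. \<rho> d h = 0" for d using insert.prems(1) unfolding invariants_def by auto
  have FI': "F \<subseteq> invariants \<rho>" using insert.prems(1) by simp
  have xI: "\<rho> d x = 0" for d using insert.prems(3) unfolding invariants_def by auto
  have "\<exists>r\<in>UNIV. \<exists>y\<in>gen UNIV smul F. x = smul r f + y"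
    using insert.prems(2) by (rule gen_insert[OF m subring_UNIV])
  then obtain s y where y: "y \<in> gen UNIV smul F" and x: "x = smul s f + y" by auto
  define K where "K = {u. smul u f \<in> gen UNIV smul F}"
  have phiK: "smul (\<phi> d u) f = \<rho> d (smul u f)" for d u
    using rsm[of d] fI[of d] by (simp add: mod_zero_r[OF m])
  have subK: "g_submodule (\<lambda>a s. j a * s) \<phi> K"
    unfolding g_submodule_def
  proof (intro conjI ballI allI)
    show "0 \<in> K" unfolding K_def by (simp add: mod_zero_l[OF m] gen.g0)
  next
    fix u v assume "u \<in> K" "v \<in> K"
    then show "u + v \<in> K" unfolding K_def by (simp add: mod_add_l[OF m] gen.gadd)
  next
    fix a u assume "u \<in> K"
    then show "j a * u \<in> K" unfolding K_def by (simp add: mod_mult[OF m] gen.gsc)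
  next
    fix d u assume "u \<in> K"
    then have "\<rho> d (smul u f) \<in> gen UNIV smul F" unfolding K_def using rho_gen[OF m radd rsm FI] by simp
    then show "\<phi> d u \<in> K" unfolding K_def by (simp add: phiK)
  qed
  have "\<exists>N'. g_submodule (\<lambda>a s. j a * s) \<phi> N' \<and> K \<inter> N' = {0} \<and>
              (\<forall>x. \<exists>y\<in>K. \<exists>z\<in>N'. x = y + z)"
    using semi[unfolded g_semisimple_def, rule_format, OF subK] .
  then obtain D where Dall: "g_submodule (\<lambda>a s. j a * s) \<phi> D \<and> K \<inter> D = {0} \<and>
              (\<forall>x. \<exists>y\<in>K. \<exists>z\<in>D. x = y + z)" by (rule exE)
  note D = conjunct1[OF Dall] conjunct1[OF conjunct2[OF Dall]] conjunct2[OF conjunct2[OF Dall]]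
  obtain s1 s2 where s1: "s1 \<in> K" and s2: "s2 \<in> D" and s: "s = s1 + s2"
    using D(3) by meson
  have s1g: "smul s1 f \<in> gen UNIV smul F" using s1 unfolding K_def by simp
  have s2inv: "\<phi> d s2 = 0" for d
  proof -
    have inD: "\<phi> d s2 \<in> D" using D(1) s2 unfolding g_submodule_def by simp
    have eq: "smul s2 f = x - y - smul s1 f" using x s by (simp add: mod_add_l[OF m] algebra_simps)
    have "\<rho> d (smul s2 f) = \<rho> d x - \<rho> d y - \<rho> d (smul s1 f)"
      unfolding eq by (simp add: addf_diff[OF radd[of d]])
    also have "\<dots> = - \<rho> d y - \<rho> d (smul s1 f)" using xI by simp
    finally have e2: "\<rho> d (smul s2 f) = - \<rho> d y - \<rho> d (smul s1 f)" .
    have "- \<rho> d y - \<rho> d (smul s1 f) \<in> gen UNIV smul F"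
      using rho_gen[OF m radd rsm FI y] rho_gen[OF m radd rsm FI s1g]
      by (intro gen_diff[OF m subring_UNIV] gen_neg[OF m subring_UNIV])
    then have "\<phi> d s2 \<in> K" unfolding K_def by (simp add: phiK e2)
    then have "\<phi> d s2 \<in> K \<inter> D" using inD by simp
    then show ?thesis using D(2) by simp
  qed
  have s2I: "s2 \<in> invariants \<phi>" unfolding invariants_def using s2inv by simp
  define x' where "x' = y + smul s1 f"
  have x'g: "x' \<in> gen UNIV smul F" unfolding x'_def using y s1g by (rule gen.gadd)
  have xx: "x = x' + smul s2 f" unfolding x'_def using x s by (simp add: mod_add_l[OF m] algebra_simps)
  have "\<rho> d x' = 0" for d
  proof -
    have "x' = x - smul s2 f" using xx by simp
    then have "\<rho> d x' = \<rho> d x - \<rho> d (smul s2 f)" by (simp add: addf_diff[OF radd[of d]])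
    also have "\<dots> = 0" using xI rsm[of d] s2inv fI by (simp add: mod_zero_l[OF m] mod_zero_r[OF m])
    finally show ?thesis .
  qed
  then have x'I: "x' \<in> invariants \<rho>" unfolding invariants_def by simp
  have "x' \<in> gen (invariants \<phi>) smul F" using insert.IH[OF FI' x'g x'I] .
  then have a1: "x' \<in> gen (invariants \<phi>) smul (insert f F)" using gen_mono[of F "insert f F"] by auto
  have a2: "smul s2 f \<in> gen (invariants \<phi>) smul (insert f F)"
    using s2I by (intro gen.gsc gen.gF) auto
  show ?case unfolding xx using a1 a2 by (rule gen.gadd)
qed



lemma choose_sets:
  assumes "\<forall>g\<in>G. \<exists>F. finite F \<and> F \<subseteq> I \<and> g \<in> gen R sc F" and "finite G"
  shows "\<exists>F. finite F \<and> F \<subseteq> I \<and> G \<subseteq> gen R sc F"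
proof -
  from bchoice[OF assms(1)] obtain FF where FF: "\<forall>g\<in>G. finite (FF g) \<and> FF g \<subseteq> I \<and> g \<in> gen R sc (FF g)"
    by (rule exE)
  define F where "F = \<Union> (FF ` G)"
  have "finite F" unfolding F_def using FF assms(2) by auto
  moreover have "F \<subseteq> I" unfolding F_def using FF by auto
  moreover have "G \<subseteq> gen R sc F"
  proof
    fix g assume g: "g \<in> G"
    then have sub: "FF g \<subseteq> F" unfolding F_def by auto
    have "g \<in> gen R sc (FF g)" using FF g by simp
    then show "g \<in> gen R sc F" using gen_mono[OF sub, of R sc] by (rule rev_subsetD)
  qed
  ultimately show ?thesis by (intro exI conjI)
qed

theorem mainTheorem1:
  fixes \<iota> :: "'k::comm_ring_1 \<Rightarrow> 'a::comm_ring_1"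
    and gsc :: "'a \<Rightarrow> 'g::ab_group_add \<Rightarrow> 'g"
    and br :: "'g \<Rightarrow> 'g \<Rightarrow> 'g"
    and \<alpha> :: "'g \<Rightarrow> 'a \<Rightarrow> 'a"
    and j :: "'a \<Rightarrow> 's::comm_ring_1"
    and Sg :: "nat \<Rightarrow> 's set"
    and \<phi> :: "'g \<Rightarrow> 's \<Rightarrow> 's"
    and smul :: "'s \<Rightarrow> 'm::ab_group_add \<Rightarrow> 'm"
    and Mg :: "int \<Rightarrow> 'm set"
    and \<rho> :: "'g \<Rightarrow> 'm \<Rightarrow> 'm"
  assumes algebroid: "lie_algebroid \<iota> gsc br \<alpha>"
    and S_alg: "graded_g_algebra \<iota> gsc br \<alpha> j Sg \<phi>"
    and S_noeth: "noetherian_on (UNIV :: 's set)"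
    and M_mod: "graded_S_g_module \<iota> gsc br \<alpha> j Sg \<phi> smul Mg \<rho>"
    and M_fin: "fin_gen_over UNIV smul UNIV"
  shows "(g_semisimple (\<lambda>a s. j a * s) \<phi> \<and> noetherian_on (invariants \<phi> \<inter> Sg 0)
            \<longrightarrow> graded_subring Sg (invariants \<phi>) \<and> noetherian_on (invariants \<phi>))
       \<and> (g_semisimple (\<lambda>a s. j a * s) \<phi> \<and> noetherian_on (invariants \<phi> \<inter> Sg 0)
            \<and> g_semisimple (\<lambda>a x. smul (j a) x) \<rho>
            \<longrightarrow> fin_gen_over (invariants \<phi>) smul (invariants \<rho>))"
proof -
  have der: "\<phi> d \<in> derivations (j \<circ> \<iota>)" for d using S_alg unfolding graded_g_algebra_def by blast
  have padd: "\<forall>x y. \<phi> d (x + y) = \<phi> d x + \<phi> d y" for d using der[of d] unfolding derivations_def by blast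
  have pmul: "\<phi> d (x * y) = x * \<phi> d y + y * \<phi> d x" for d x y using der[of d] unfolding derivations_def by blast
  have padd2: "\<forall>d x y. \<phi> d (x + y) = \<phi> d x + \<phi> d y" using padd by blast
  have psm: "\<forall>d s x. \<phi> d (s * x) = \<phi> d s * x + s * \<phi> d x" using pmul by (simp add: algebra_simps)
  have mS: "module_t ((*) :: 's \<Rightarrow> 's \<Rightarrow> 's)" unfolding module_t_def by (auto simp: algebra_simps)
  have gradS: "direct_grading Sg" and presS: "\<forall>d i. \<forall>x\<in>Sg i. \<phi> d x \<in> Sg i"
    using S_alg unfolding graded_g_algebra_def graded_algebra_def by blast+
  have mM: "module_t smul" using M_mod unfolding graded_S_g_module_def by blast
  have gM: "g_module \<iota> gsc br \<alpha> (\<lambda>a x. smul (j a) x) \<rho>" using M_mod unfolding graded_S_g_module_def by blast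
  have radd: "\<forall>d x y. \<rho> d (x + y) = \<rho> d x + \<rho> d y" using conjunct1[OF conjunct2[OF gM[unfolded g_module_def]]] .
  have rsm: "\<forall>d s x. \<rho> d (smul s x) = smul (\<phi> d s) x + smul s (\<rho> d x)"
    using M_mod unfolding graded_S_g_module_def by blast
  define Sb where "Sb = invariants \<phi>"
  have p0: "\<phi> d 0 = 0" for d using addf_zero[OF padd[of d]] .
  have p1: "\<phi> d 1 = 0" for d using pmul[of d 1 1] by simp
  have subSb: "subring_t Sb"
    unfolding subring_t_def Sb_def invariants_def
    using p0 p1 addf_neg[OF padd] padd pmul by simp
  have part1: "g_semisimple (\<lambda>a s. j a * s) \<phi> \<longrightarrow> graded_subring Sg Sb \<and> noetherian_on Sb"
  proof
    assume semi: "g_semisimple (\<lambda>a s. j a * s) \<phi>"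
    have "graded_subring Sg Sb"
      unfolding graded_subring_def
    proof (intro conjI ballI subSb)
      fix x assume xSb: "x \<in> Sb"
      have "\<exists>!c. (\<forall>i. c i \<in> Sg i) \<and> finite {i. c i \<noteq> 0} \<and> x = (\<Sum>i\<in>{i. c i \<noteq> 0}. c i)"
        using gradS unfolding direct_grading_def by blast
      then obtain c where c: "(\<forall>i. c i \<in> Sg i) \<and> finite {i. c i \<noteq> 0} \<and> x = (\<Sum>i\<in>{i. c i \<noteq> 0}. c i)"
        by (rule ex1E)
      note cc = conjunct1[OF c] conjunct1[OF conjunct2[OF c]] conjunct2[OF conjunct2[OF c]]
      have cinv: "\<phi> d (c i) = 0" for d i
      proof -
        define c' where "c' = (\<lambda>i. \<phi> d (c i))"
        have sub: "{i. c' i \<noteq> 0} \<subseteq> {i. c i \<noteq> 0}" unfolding c'_def using p0 by auto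
        have "0 = \<phi> d x" using xSb unfolding Sb_def invariants_def by simp
        also have "\<dots> = (\<Sum>i\<in>{i. c i \<noteq> 0}. c' i)" unfolding c'_def
          by (subst cc(3)) (rule addf_sum[OF padd])
        also have "\<dots> = (\<Sum>i\<in>{i. c' i \<noteq> 0}. c' i)"
          by (rule sum.mono_neutral_right[OF cc(2) sub]) auto
        finally have e0: "(0::'s) = (\<Sum>i\<in>{i. c' i \<noteq> 0}. c' i)" .
        have P1: "(\<forall>i. c' i \<in> Sg i) \<and> finite {i. c' i \<noteq> 0} \<and> (0::'s) = (\<Sum>i\<in>{i. c' i \<noteq> 0}. c' i)"
          using cc(1) presS cc(2) sub e0 unfolding c'_def by (auto intro: finite_subset)
        have P2: "(\<forall>i. (\<lambda>i. 0::'s) i \<in> Sg i) \<and> finite {i. (\<lambda>i. 0::'s) i \<noteq> 0} \<and> (0::'s) = (\<Sum>i\<in>{i. (\<lambda>i. 0::'s) i \<noteq> 0}. (\<lambda>i. 0::'s) i)"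
          using gradS unfolding direct_grading_def by simp
        have "\<exists>!c. (\<forall>i. c i \<in> Sg i) \<and> finite {i. c i \<noteq> 0} \<and> (0::'s) = (\<Sum>i\<in>{i. c i \<noteq> 0}. c i)"
          using gradS unfolding direct_grading_def by blast
        then obtain c0 where "(\<forall>i. c0 i \<in> Sg i) \<and> finite {i. c0 i \<noteq> 0} \<and> (0::'s) = (\<Sum>i\<in>{i. c0 i \<noteq> 0}. c0 i)"
          and uq: "\<And>y. (\<forall>i. y i \<in> Sg i) \<and> finite {i. y i \<noteq> 0} \<and> (0::'s) = (\<Sum>i\<in>{i. y i \<noteq> 0}. y i) \<Longrightarrow> y = c0"
          by (rule ex1E) (rule that, assumption, blast)
        have "c' = c0" using uq[OF P1] .
        moreover have "(\<lambda>i. 0::'s) = c0" using uq[OF P2] .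
        ultimately have "c' = (\<lambda>i. 0)" by simp
        then show ?thesis unfolding c'_def by (metis)
      qed
      obtain n where n: "\<forall>i\<in>{i. c i \<noteq> 0}. i \<le> n" using cc(2) finite_nat_set_iff_bounded_le by auto
      have "x = (\<Sum>i\<le>n. c i)"
        unfolding cc(3) by (rule sum.mono_neutral_left) (use n in auto)
      moreover have "\<forall>i. c i \<in> Sb \<inter> Sg i" using cinv cc(1) unfolding Sb_def invariants_def by simp
      ultimately show "\<exists>c n. (\<forall>i. c i \<in> Sb \<inter> Sg i) \<and> x = (\<Sum>i\<le>n. c i)" by (intro exI conjI)
    qed
    moreover have "noetherian_on Sb"
      unfolding noetherian_on_def
    proof (intro allI impI)
      fix I assume I: "ideal_in Sb I"
      have ISb: "I \<subseteq> Sb" and I0: "0 \<in> I" and Iadd: "\<forall>x\<in>I. \<forall>y\<in>I. x + y \<in> I"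
        and Imul: "\<forall>r\<in>Sb. \<forall>x\<in>I. r * x \<in> I" using I unfolding ideal_in_def by auto
      define J where "J = {x. \<exists>F. finite F \<and> F \<subseteq> I \<and> x \<in> gen UNIV (*) F}"
      have idJ: "ideal_in UNIV J"
        unfolding ideal_in_def
      proof (intro conjI ballI subset_UNIV)
        show "0 \<in> J" unfolding J_def by (auto intro!: exI[of _ "{}"] gen.g0)
      next
        fix x y assume "x \<in> J" "y \<in> J"
        then obtain F1 F2 where "finite F1" "F1 \<subseteq> I" "x \<in> gen UNIV (*) F1"
          "finite F2" "F2 \<subseteq> I" "y \<in> gen UNIV (*) F2" unfolding J_def by auto
        moreover have "gen UNIV (*) F1 \<subseteq> gen UNIV (*) (F1 \<union> F2)" "gen UNIV (*) F2 \<subseteq> gen UNIV (*) (F1 \<union> F2)"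
          by (simp_all add: gen_mono)
        ultimately have "finite (F1 \<union> F2) \<and> F1 \<union> F2 \<subseteq> I \<and> x + y \<in> gen UNIV (*) (F1 \<union> F2)"
          by (auto intro: gen.gadd)
        then show "x + y \<in> J" unfolding J_def by auto
      next
        fix r x assume "x \<in> J"
        then obtain F1 where "finite F1" "F1 \<subseteq> I" "x \<in> gen UNIV (*) F1" unfolding J_def by auto
        moreover have "r * x \<in> gen UNIV (*) F1" using calculation(3) by (intro gen.gsc) auto
        ultimately show "r * x \<in> J" unfolding J_def by auto
      qed
      have "fin_gen_over UNIV (*) J" using S_noeth[unfolded noetherian_on_def, rule_format, OF idJ] .
      then have "\<exists>G. finite G \<and> G \<subseteq> J \<and> J = gen UNIV (*) G"
        using fin_gen_iff[OF mS subring_UNIV] by simp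
      then obtain G where Gall: "finite G \<and> G \<subseteq> J \<and> J = gen UNIV (*) G" by (rule exE)
      note G = conjunct1[OF Gall] conjunct1[OF conjunct2[OF Gall]] conjunct2[OF conjunct2[OF Gall]]
      have "\<forall>g\<in>G. \<exists>F. finite F \<and> F \<subseteq> I \<and> g \<in> gen UNIV (*) F" using G(2) unfolding J_def by auto
      then have "\<exists>F. finite F \<and> F \<subseteq> I \<and> G \<subseteq> gen UNIV (*) F" using G(1) by (rule choose_sets)
      then obtain F where Fall: "finite F \<and> F \<subseteq> I \<and> G \<subseteq> gen UNIV (*) F" by (rule exE)
      note F = conjunct1[OF Fall] conjunct1[OF conjunct2[OF Fall]] conjunct2[OF conjunct2[OF Fall]]
      have IJ: "I \<subseteq> J"
      proof
        fix x assume "x \<in> I"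
        then have "finite {x} \<and> {x} \<subseteq> I \<and> x \<in> gen UNIV (*) {x}" by (auto intro: gen.gF)
        then show "x \<in> J" unfolding J_def by auto
      qed
      have JF: "J \<subseteq> gen UNIV (*) F" unfolding G(3) using F(3) by (rule gen_subset)
      have "I \<subseteq> gen Sb (*) F"
      proof
        fix x assume xI: "x \<in> I"
        have "x \<in> gen UNIV (*) F" using xI IJ JF by auto
        moreover have "F \<subseteq> invariants \<phi>" using F(2) ISb unfolding Sb_def by auto
        moreover have "x \<in> invariants \<phi>" using xI ISb unfolding Sb_def by auto
        ultimately show "x \<in> gen Sb (*) F"
          unfolding Sb_def using inv_lemma[OF semi mS padd2 psm F(1)] by simp
      qed
      moreover have "gen Sb (*) F \<subseteq> I"
        by (rule gen_closed) (use I0 Iadd Imul F(2) in auto)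
      ultimately have "I = gen Sb (*) F" by (rule subset_antisym)
      then have "\<exists>F. finite F \<and> F \<subseteq> I \<and> I = gen Sb (*) F" using F(1,2) by (intro exI conjI)
      then show "fin_gen_over Sb (*) I" using fin_gen_iff[OF mS subSb] by simp
    qed
    ultimately show "graded_subring Sg Sb \<and> noetherian_on Sb" by (rule conjI)
  qed
  have part2: "g_semisimple (\<lambda>a s. j a * s) \<phi> \<and> g_semisimple (\<lambda>a x. smul (j a) x) \<rho>
      \<longrightarrow> fin_gen_over Sb smul (invariants \<rho>)"
  proof
    assume "g_semisimple (\<lambda>a s. j a * s) \<phi> \<and> g_semisimple (\<lambda>a x. smul (j a) x) \<rho>"
    then have semi: "g_semisimple (\<lambda>a s. j a * s) \<phi>" by simp
    define Mb where "Mb = invariants \<rho>"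
    have r0: "\<rho> d 0 = 0" for d using addf_zero[of "\<rho> d"] radd by simp
    define N where "N = {x. \<exists>F. finite F \<and> F \<subseteq> Mb \<and> x \<in> gen UNIV smul F}"
    have "\<exists>G. finite G \<and> G \<subseteq> UNIV \<and> UNIV = gen UNIV smul G"
      using M_fin fin_gen_iff[OF mM subring_UNIV] by simp
    then obtain G where Gall: "finite G \<and> G \<subseteq> UNIV \<and> UNIV = gen UNIV smul G" by (rule exE)
    note G = conjunct1[OF Gall] conjunct2[OF conjunct2[OF Gall]]
    have "\<exists>H. finite H \<and> H \<subseteq> N \<and> N = gen UNIV smul H"
    proof (rule noeth_module[OF mM S_noeth G(1)])
      show "N \<subseteq> gen UNIV smul G" unfolding G(2)[symmetric] by (rule subset_UNIV)
      show "0 \<in> N" unfolding N_def by (auto intro!: exI[of _ "{}"] gen.g0)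
      show "\<forall>x\<in>N. \<forall>y\<in>N. x + y \<in> N"
      proof (intro ballI)
        fix x y assume "x \<in> N" "y \<in> N"
        then obtain F1 F2 where "finite F1" "F1 \<subseteq> Mb" "x \<in> gen UNIV smul F1"
          "finite F2" "F2 \<subseteq> Mb" "y \<in> gen UNIV smul F2" unfolding N_def by auto
        moreover have "gen UNIV smul F1 \<subseteq> gen UNIV smul (F1 \<union> F2)" "gen UNIV smul F2 \<subseteq> gen UNIV smul (F1 \<union> F2)"
          by (simp_all add: gen_mono)
        ultimately have "finite (F1 \<union> F2) \<and> F1 \<union> F2 \<subseteq> Mb \<and> x + y \<in> gen UNIV smul (F1 \<union> F2)"
          by (auto intro: gen.gadd)
        then show "x + y \<in> N" unfolding N_def by auto
      qed
      show "\<forall>r. \<forall>x\<in>N. smul r x \<in> N"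
      proof (intro allI ballI)
        fix r x assume "x \<in> N"
        then obtain F1 where "finite F1" "F1 \<subseteq> Mb" "x \<in> gen UNIV smul F1" unfolding N_def by auto
        moreover have "smul r x \<in> gen UNIV smul F1" using calculation(3) by (intro gen.gsc) auto
        ultimately show "smul r x \<in> N" unfolding N_def by auto
      qed
    qed
    then obtain H where Hall: "finite H \<and> H \<subseteq> N \<and> N = gen UNIV smul H" by (rule exE)
    note H = conjunct1[OF Hall] conjunct1[OF conjunct2[OF Hall]] conjunct2[OF conjunct2[OF Hall]]
    have "\<forall>g\<in>H. \<exists>F. finite F \<and> F \<subseteq> Mb \<and> g \<in> gen UNIV smul F" using H(2) unfolding N_def by auto
    then have "\<exists>F. finite F \<and> F \<subseteq> Mb \<and> H \<subseteq> gen UNIV smul F" using H(1) by (rule choose_sets)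
    then obtain F where Fall: "finite F \<and> F \<subseteq> Mb \<and> H \<subseteq> gen UNIV smul F" by (rule exE)
    note F = conjunct1[OF Fall] conjunct1[OF conjunct2[OF Fall]] conjunct2[OF conjunct2[OF Fall]]
    have MN: "Mb \<subseteq> N"
    proof
      fix x assume "x \<in> Mb"
      then have "finite {x} \<and> {x} \<subseteq> Mb \<and> x \<in> gen UNIV smul {x}" by (auto intro: gen.gF)
      then show "x \<in> N" unfolding N_def by auto
    qed
    have NF: "N \<subseteq> gen UNIV smul F" unfolding H(3) using F(3) by (rule gen_subset)
    have "Mb \<subseteq> gen Sb smul F"
    proof
      fix x assume xM: "x \<in> Mb"
      have "x \<in> gen UNIV smul F" using xM MN NF by auto
      moreover have "F \<subseteq> invariants \<rho>" using F(2) unfolding Mb_def by auto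
      moreover have "x \<in> invariants \<rho>" using xM unfolding Mb_def by auto
      ultimately show "x \<in> gen Sb smul F"
        unfolding Sb_def using inv_lemma[OF semi mM radd rsm F(1)] by simp
    qed
    moreover have "gen Sb smul F \<subseteq> Mb"
    proof (rule gen_closed)
      show "0 \<in> Mb" unfolding Mb_def invariants_def using r0 by simp
      show "\<forall>x\<in>Mb. \<forall>y\<in>Mb. x + y \<in> Mb" unfolding Mb_def invariants_def using radd by simp
      show "\<forall>r\<in>Sb. \<forall>x\<in>Mb. smul r x \<in> Mb" unfolding Mb_def Sb_def invariants_def
        using rsm by (simp add: mod_zero_l[OF mM] mod_zero_r[OF mM])
      show "F \<subseteq> Mb" using F(2) .
    qed
    ultimately have "Mb = gen Sb smul F" by (rule subset_antisym)
    then have "\<exists>F. finite F \<and> F \<subseteq> Mb \<and> Mb = gen Sb smul F" using F(1,2) by (intro exI conjI)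
    then show "fin_gen_over Sb smul (invariants \<rho>)" using fin_gen_iff[OF mM subSb] unfolding Mb_def by simp
  qed
  show ?thesis using part1 part2 unfolding Sb_def by blast
qed

end
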